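(* For each $x\in\Omega$, the set $\bigcup_{n\ge0}T^{-n}(x)$ is dense in $\Omega$.
   Context: Let $I=[0,1)$ with its usual metric $d_I$, fix $\theta\in(0,1)$, and let $\Omega=I^{\mathbb Z}$ with metric $d(x,y)=\sup_{k\in\mathbb Z}\theta^{|k|}d_I(x_k,y_k)$. Let $\tau:I\to I$ have full branches, so that $b=\#\tau^{-1}(t)$ is constant. Assume there is $\eta\in(0,1)$ such that every inverse branch $\zeta$ of $\tau$ satisfies $d_I(\zeta(s),\zeta(t))\le\eta\,d_I(s,t)$. Let $(\bar\tau x)_i=\tau(x_i)$ and let $\sigma$ be the shift $(\sigma x)_i=x_{i+1}$. Let $E:\Omega\to\Omega$ be invertible and suppose there is $C_E\in(0,\eta^{-1})$ with $d(\sigma^nE^{-1}x,\sigma^nE^{-1}y)\le C_E\,d(\sigma^nx,\sigma^ny)$ for all $n\in\mathbb Z$ and $x,y\in\Omega$. The coupled map is $T=E\circ\bar\tau$. *)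

theory Defs
  imports Complex_Main
begin

definition unitI :: "real set" where
  "unitI = {0..<1}"

definition Omega :: "(int \<Rightarrow> real) set" where
  "Omega = {x. \<forall>k. x k \<in> unitI}"

definition dOm :: "real \<Rightarrow> (int \<Rightarrow> real) \<Rightarrow> (int \<Rightarrow> real) \<Rightarrow> real" where
  "dOm \<theta> x y = (SUP k. \<theta> ^ nat \<bar>k\<bar> * \<bar>x k - y k\<bar>)"

definition shiftn :: "int \<Rightarrow> (int \<Rightarrow> real) \<Rightarrow> (int \<Rightarrow> real)" where
  "shiftn n x = (\<lambda>i. x (i + n))"

definition taubar :: "(real \<Rightarrow> real) \<Rightarrow> (int \<Rightarrow> real) \<Rightarrow> (int \<Rightarrow> real)" where
  "taubar \<tau> x = (\<lambda>i. \<tau> (x i))"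

end

theory Submission
  imports Defs
begin

lemma term_le1:
  assumes "u \<in> Omega" "v \<in> Omega" "0 < \<theta>" "\<theta> < 1"
  shows "\<theta> ^ nat \<bar>k\<bar> * \<bar>u k - v k\<bar> \<le> 1"
proof -
  have a: "u k \<in> unitI" "v k \<in> unitI" using assms by (auto simp: Omega_def)
  have "\<bar>u k - v k\<bar> \<le> 1" using a by (auto simp: unitI_def)
  moreover have "\<theta> ^ nat \<bar>k\<bar> \<le> 1" using assms by (simp add: power_le_one)
  moreover have "0 \<le> \<theta> ^ nat \<bar>k\<bar>" using assms by simp
  ultimately show ?thesis by (metis abs_ge_zero mult_le_one)
qed

lemma bdd_dOm:
  assumes "u \<in> Omega" "v \<in> Omega" "0 < \<theta>" "\<theta> < 1"
  shows "bdd_above (range (\<lambda>k. \<theta> ^ nat \<bar>k\<bar> * \<bar>u k - v k\<bar>))"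
  using term_le1[OF assms] by (intro bdd_aboveI[where M=1]) auto

lemma dOm_le1:
  assumes "u \<in> Omega" "v \<in> Omega" "0 < \<theta>" "\<theta> < 1"
  shows "dOm \<theta> u v \<le> 1"
  unfolding dOm_def using term_le1[OF assms] by (intro cSUP_least) auto

lemma dOm_contr:
  assumes "u \<in> Omega" "v \<in> Omega" "0 < \<theta>" "\<theta> < 1" "0 \<le> \<eta>"
    and "\<And>k. \<bar>f k - g k\<bar> \<le> \<eta> * \<bar>u k - v k\<bar>"
  shows "dOm \<theta> f g \<le> \<eta> * dOm \<theta> u v"
  unfolding dOm_def
proof (intro cSUP_least)
  fix k
  have "\<theta> ^ nat \<bar>k\<bar> * \<bar>f k - g k\<bar> \<le> \<theta> ^ nat \<bar>k\<bar> * (\<eta> * \<bar>u k - v k\<bar>)"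
    using assms by (intro mult_left_mono) auto
  also have "\<dots> = \<eta> * (\<theta> ^ nat \<bar>k\<bar> * \<bar>u k - v k\<bar>)" by simp
  also have "\<dots> \<le> \<eta> * (SUP k. \<theta> ^ nat \<bar>k\<bar> * \<bar>u k - v k\<bar>)"
    using assms bdd_dOm[OF assms(1-4)] by (intro mult_left_mono cSUP_upper) auto
  finally show "\<theta> ^ nat \<bar>k\<bar> * \<bar>f k - g k\<bar> \<le> \<eta> * (SUP k. \<theta> ^ nat \<bar>k\<bar> * \<bar>u k - v k\<bar>)" .
qed simp

theorem mainTheorem11:
  fixes \<theta> \<eta> C\<^sub>E :: real and \<tau> :: "real \<Rightarrow> real"
    and b :: nat and \<zeta> :: "nat \<Rightarrow> real \<Rightarrow> real"
    and E :: "(int \<Rightarrow> real) \<Rightarrow> (int \<Rightarrow> real)" and x :: "int \<Rightarrow> real"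
  assumes "0 < \<theta>" and "\<theta> < 1" and "0 < \<eta>" and "\<eta> < 1"
    and "\<forall>s\<in>unitI. \<tau> s \<in> unitI"
    and "\<forall>j<b. \<forall>t\<in>unitI. \<zeta> j t \<in> unitI \<and> \<tau> (\<zeta> j t) = t"
    and "\<forall>t\<in>unitI. {s\<in>unitI. \<tau> s = t} = (\<lambda>j. \<zeta> j t) ` {..<b}
                  \<and> card {s\<in>unitI. \<tau> s = t} = b"
    and "\<forall>j<b. \<forall>s\<in>unitI. \<forall>t\<in>unitI. \<bar>\<zeta> j s - \<zeta> j t\<bar> \<le> \<eta> * \<bar>s - t\<bar>"
    and "bij_betw E Omega Omega"
    and "0 < C\<^sub>E" and "C\<^sub>E < 1 / \<eta>"
    and "\<forall>n::int. \<forall>y\<in>Omega. \<forall>z\<in>Omega.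
           dOm \<theta> (shiftn n (inv_into Omega E y)) (shiftn n (inv_into Omega E z))
             \<le> C\<^sub>E * dOm \<theta> (shiftn n y) (shiftn n z)"
    and "x \<in> Omega"
  shows "\<forall>y\<in>Omega. \<forall>\<epsilon>>0. \<exists>z\<in>(\<Union>n. {w\<in>Omega. ((E \<circ> taubar \<tau>) ^^ n) w = x}).
           dOm \<theta> z y < \<epsilon>"
proof -
  define T where "T = E \<circ> taubar \<tau>"
  define Ei where "Ei = inv_into Omega E"
  define c where "c = \<eta> * C\<^sub>E"
  have c0: "0 < c" using assms by (simp add: c_def)
  have c1: "c < 1" using assms by (simp add: c_def field_simps)
  have shift0: "shiftn 0 u = u" for u by (simp add: shiftn_def)
  have Eicontr: "dOm \<theta> (Ei u) (Ei v) \<le> C\<^sub>E * dOm \<theta> u v" if "u \<in> Omega" "v \<in> Omega" for u v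
    using assms(12) that unfolding Ei_def by (metis shift0)
  have EiO: "Ei u \<in> Omega" if "u \<in> Omega" for u
    using assms(9) that unfolding Ei_def by (metis bij_betw_def inv_into_into)
  have EEi: "E (Ei u) = u" if "u \<in> Omega" for u
    using assms(9) that unfolding Ei_def by (metis bij_betw_def f_inv_into_f)
  have EiE: "Ei (E u) = u" if "u \<in> Omega" for u
    using assms(9) that unfolding Ei_def by (metis bij_betw_def inv_into_f_f)
  have tauO: "taubar \<tau> u \<in> Omega" if "u \<in> Omega" for u
    using that assms(5) by (auto simp: Omega_def taubar_def)
  have TO: "T u \<in> Omega" if "u \<in> Omega" for u
    using that tauO assms(9) unfolding T_def by (auto simp: bij_betw_def)
  have TnO: "(T ^^ n) u \<in> Omega" if "u \<in> Omega" for u n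
    using that by (induction n) (auto intro: TO)
  define br where "br w i = (SOME j. j < b \<and> \<zeta> j (\<tau> (w i)) = w i)" for w :: "int \<Rightarrow> real" and i
  define G where "G w u = (\<lambda>i. \<zeta> (br w i) (u i))" for w u :: "int \<Rightarrow> real"
  have brP: "br w i < b \<and> \<zeta> (br w i) (\<tau> (w i)) = w i" if "w \<in> Omega" for w i
  proof -
    have wi: "w i \<in> unitI" using that by (auto simp: Omega_def)
    hence "\<tau> (w i) \<in> unitI" using assms(5) by auto
    hence "w i \<in> (\<lambda>j. \<zeta> j (\<tau> (w i))) ` {..<b}" using assms(7) wi by blast
    then obtain j where "j < b" "\<zeta> j (\<tau> (w i)) = w i" by auto
    thus ?thesis unfolding br_def by (metis (mono_tags, lifting) someI)
  qed
  have Gtau: "G w (taubar \<tau> w) = w" if "w \<in> Omega" for w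
    using brP[OF that] by (auto simp: G_def taubar_def)
  have GO: "G w u \<in> Omega" if "w \<in> Omega" "u \<in> Omega" for w u
    using brP[OF that(1)] assms(6) that(2) by (auto simp: G_def Omega_def)
  have tauG: "taubar \<tau> (G w u) = u" if "w \<in> Omega" "u \<in> Omega" for w u
    using brP[OF that(1)] assms(6) that(2) by (auto simp: G_def Omega_def taubar_def)
  have Gcontr: "dOm \<theta> (G w u) (G w v) \<le> \<eta> * dOm \<theta> u v" if "w \<in> Omega" "u \<in> Omega" "v \<in> Omega" for w u v
  proof (rule dOm_contr[OF that(2,3) assms(1,2)])
    show "0 \<le> \<eta>" using assms by simp
    fix k
    show "\<bar>G w u k - G w v k\<bar> \<le> \<eta> * \<bar>u k - v k\<bar>"
      using brP[OF that(1)] assms(8) that(2,3) by (auto simp: G_def Omega_def)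
  qed
  have key: "\<forall>y\<in>Omega. \<exists>z\<in>Omega. (T ^^ n) z = x \<and> dOm \<theta> z y \<le> c ^ n * dOm \<theta> x ((T ^^ n) y)" for n
  proof (induction n)
    case 0
    then show ?case using assms(13) by auto
  next
    case (Suc n)
    show ?case
    proof
      fix y assume y: "y \<in> Omega"
      obtain z' where z': "z' \<in> Omega" "(T ^^ n) z' = x"
        "dOm \<theta> z' (T y) \<le> c ^ n * dOm \<theta> x ((T ^^ n) (T y))"
        using Suc TO[OF y] by blast
      define z where "z = G y (Ei z')"
      have zO: "z \<in> Omega" using GO[OF y EiO[OF z'(1)]] by (simp add: z_def)
      have Tz: "T z = z'" unfolding T_def z_def
        using tauG[OF y EiO[OF z'(1)]] EEi[OF z'(1)] by simp
      have Ty: "Ei (T y) = taubar \<tau> y" unfolding T_def using EiE[OF tauO[OF y]] by simp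
      have "dOm \<theta> z y = dOm \<theta> (G y (Ei z')) (G y (Ei (T y)))"
        using Ty Gtau[OF y] by (simp add: z_def)
      also have "\<dots> \<le> \<eta> * dOm \<theta> (Ei z') (Ei (T y))"
        by (rule Gcontr[OF y EiO[OF z'(1)] EiO[OF TO[OF y]]])
      also have "\<dots> \<le> \<eta> * (C\<^sub>E * dOm \<theta> z' (T y))"
        using Eicontr[OF z'(1) TO[OF y]] assms(3) by (intro mult_left_mono) auto
      also have "\<dots> = c * dOm \<theta> z' (T y)" by (simp add: c_def)
      also have "\<dots> \<le> c * (c ^ n * dOm \<theta> x ((T ^^ n) (T y)))"
        using z'(3) c0 by (intro mult_left_mono) auto
      also have "\<dots> = c ^ Suc n * dOm \<theta> x ((T ^^ Suc n) y)"
        by (simp only: funpow_Suc_right comp_def power_Suc mult.assoc)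
      finally have "dOm \<theta> z y \<le> c ^ Suc n * dOm \<theta> x ((T ^^ Suc n) y)" .
      moreover have "(T ^^ Suc n) z = x" using Tz z'(2) by (simp only: funpow_Suc_right comp_def)
      ultimately show "\<exists>z\<in>Omega. (T ^^ Suc n) z = x \<and> dOm \<theta> z y \<le> c ^ Suc n * dOm \<theta> x ((T ^^ Suc n) y)"
        using zO by blast
    qed
  qed
  show ?thesis
  proof (intro ballI allI impI)
    fix y :: "int \<Rightarrow> real" and \<epsilon> :: real
    assume y: "y \<in> Omega" and e: "\<epsilon> > 0"
    obtain n where n: "c ^ n < \<epsilon>" using real_arch_pow_inv[OF e c1] by blast
    obtain z where z: "z \<in> Omega" "(T ^^ n) z = x" "dOm \<theta> z y \<le> c ^ n * dOm \<theta> x ((T ^^ n) y)"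
      using key y by blast
    have "dOm \<theta> x ((T ^^ n) y) \<le> 1" using dOm_le1[OF assms(13) TnO[OF y] assms(1,2)] .
    hence "c ^ n * dOm \<theta> x ((T ^^ n) y) \<le> c ^ n" using c0
      by (metis mult_left_le zero_le_power less_imp_le)
    hence "dOm \<theta> z y < \<epsilon>" using z n by linarith
    thus "\<exists>z\<in>(\<Union>n. {w\<in>Omega. ((E \<circ> taubar \<tau>) ^^ n) w = x}). dOm \<theta> z y < \<epsilon>"
      using z unfolding T_def by blast
  qed
qed

end
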